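(* Let $(X,\cdot)$ be a finite Rump right quasigroup. Then for every $x\in X$ there is a unique $y\in X$ such that $x(y/x) = y$.
   Context: A right quasigroup is a magma in which every right translation $y\mapsto yx$ is a bijection; $y/x$ denotes the unique $w$ with $wx = y$. A Rump right quasigroup is a right quasigroup satisfying $(zx)(yx)=(zy)(xy)$ for all $x,y,z$. *)

theory Defs
  imports Main
begin

definition right_quasigroup :: "('a \<Rightarrow> 'a \<Rightarrow> 'a) \<Rightarrow> bool" where
  "right_quasigroup m \<longleftrightarrow> (\<forall>x. bij (\<lambda>y. m y x))"

definition rump_right_quasigroup :: "('a \<Rightarrow> 'a \<Rightarrow> 'a) \<Rightarrow> bool" where
  "rump_right_quasigroup m \<longleftrightarrow> right_quasigroup m \<and>
     (\<forall>x y z. m (m z x) (m y x) = m (m z y) (m x y))"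

definition rdiv :: "('a \<Rightarrow> 'a \<Rightarrow> 'a) \<Rightarrow> 'a \<Rightarrow> 'a \<Rightarrow> 'a" where
  "rdiv m y x = (THE w. m w x = y)"

end

theory Submission
  imports Defs
begin

lemma rdiv_prop:
  assumes "right_quasigroup m"
  shows "m (rdiv m y x) x = y" and "rdiv m (m w x) x = w"
proof -
  have b: "bij (\<lambda>y. m y x)" using assms unfolding right_quasigroup_def by blast
  then have ex: "\<exists>!w. m w x = y"
    by (metis (mono_tags, lifting) bij_def inj_eq surj_def)
  show "m (rdiv m y x) x = y" unfolding rdiv_def using theI'[OF ex] .
  have ex2: "\<exists>!u. m u x = m w x" using b by (metis bij_def inj_eq)
  show "rdiv m (m w x) x = w" unfolding rdiv_def using the1_equality[OF ex2] by blast
qed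

theorem mainTheorem5:
  fixes m :: "'a::finite \<Rightarrow> 'a \<Rightarrow> 'a"
  assumes "rump_right_quasigroup m"
  shows "\<forall>x. \<exists>!y. m x (rdiv m y x) = y"
proof
  fix x
  have rq: "right_quasigroup m" using assms unfolding rump_right_quasigroup_def by blast
  have rump: "\<And>x y z. m (m z x) (m y x) = m (m z y) (m x y)"
    using assms unfolding rump_right_quasigroup_def by blast
  have inj: "\<And>a u v. m u a = m v a \<Longrightarrow> u = v"
    using rq unfolding right_quasigroup_def by (metis bij_def injD)
  have comm: "w = x" if h: "m x w = m w x" for w
  proof -
    have "m z x = m z w" for z
    proof -
      have "m (m z x) (m w x) = m (m z w) (m x w)" by (rule rump)
      then have "m (m z x) (m w x) = m (m z w) (m w x)" using h by simp
      then show ?thesis by (rule inj)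
    qed
    then have "m x x = m x w" by blast
    then have "m x x = m w x" using h by simp
    then show ?thesis by (rule inj[symmetric])
  qed
  show "\<exists>!y. m x (rdiv m y x) = y"
  proof (rule ex1I[of _ "m x x"])
    show "m x (rdiv m (m x x) x) = m x x" using rdiv_prop(2)[OF rq] by simp
  next
    fix y assume a: "m x (rdiv m y x) = y"
    define w where "w = rdiv m y x"
    have "m w x = y" unfolding w_def by (rule rdiv_prop(1)[OF rq])
    with a have "m x w = m w x" unfolding w_def by simp
    then have "w = x" by (rule comm)
    then show "y = m x x" using \<open>m w x = y\<close> by simp
  qed
qed

end
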